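(* Let $\mathcal C=(X,\{\succsim_i\}_{i\in N\cup\{A\}})$ be a collective choice problem satisfying Generic Finite Alternatives. Then the following holds if and only if $\mathcal C$ is Manipulable: for every game (amendment procedure) with at least $|X|-1$ rounds and for every initial default $x^0\in X$, in every equilibrium the implemented policy is the agenda setter's favorite policy (with probability one).
   Context: Collective choice problem: a set $N=\{1,\dots,n\}$ of voters with $n$ odd and a non-voting agenda setter $A$ choose a policy from a compact metrizable policy space $X$. Each player $i\in N\cup\{A\}$ has a complete, transitive, continuous preference $\succsim_i$ on $X$ with a continuous utility representation $u_i$. Write $x\succsim_M y$ (resp. $x\succ_M y$) if a strict majority of voters weakly (resp. strictly) prefer $x$ to $y$. $X_A^*=\arg\max_{x\in X}u_A(x)$ is the set of the agenda setter's favorite policies. A policy $x$ is Improvable if there is $y$ with $y\succ_A x$ and $y\succ_M x$, and Unimprovable otherwise. $\mathcal C$ is Manipulable if every $x\notin X_A^*$ is Improvable. $\mathcal C$ satisfies Generic Finite Alternatives if $X$ is finite and every $\succsim_i$ ($i\in N\cup\{A\}$) is antisymmetric (strict). Amendment procedure with $T$ rounds: an exogenous initial default $x^0$ is given; in each round $t=1,\dots,T$ the agenda setter proposes $a^t\in X$ (possibly equal to the default), which is put to a simultaneous vote against the current default $x^{t-1}$; if a majority of voters vote yes then $x^t=a^t$, otherwise $x^t=x^{t-1}$; the policy $x^T$ is implemented and determines payoffs. Players observe the full history of proposals and votes and may condition (possibly mixed) actions on it. Equilibrium means subgame perfect equilibrium with as-if-pivotal voting: at any history where, conditional on the proposal passing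 (resp. being rejected), the continuation outcome is $x$ (resp. $y$) irrespective of the composition of the current vote, every voter with a strict preference between $x$ and $y$ votes for the option leading to her preferred outcome. *)

theory Defs
  imports "HOL-Probability.Probability"
begin

(* Collective choice problem: policies = finite type 'a (X = UNIV), voters = finite type 'v
   (N = UNIV, |N| = CARD('v)), setter utility uA, voter utilities u i. *)

definition strict_majority :: "('v::finite \<Rightarrow> bool) \<Rightarrow> bool" where
  "strict_majority P \<longleftrightarrow> 2 * card {i. P i} > CARD('v)"

definition maj_strict_pref :: "('v::finite \<Rightarrow> 'a \<Rightarrow> real) \<Rightarrow> 'a \<Rightarrow> 'a \<Rightarrow> bool" where
  "maj_strict_pref u x y \<longleftrightarrow> strict_majority (\<lambda>i. u i x > u i y)"

definition fav :: "('a \<Rightarrow> real) \<Rightarrow> 'a set" where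
  "fav uA = {x. \<forall>y. uA y \<le> uA x}"

definition improvable :: "('a \<Rightarrow> real) \<Rightarrow> ('v::finite \<Rightarrow> 'a \<Rightarrow> real) \<Rightarrow> 'a \<Rightarrow> bool" where
  "improvable uA u x \<longleftrightarrow> (\<exists>y. uA y > uA x \<and> maj_strict_pref u y x)"

definition manipulable :: "('a \<Rightarrow> real) \<Rightarrow> ('v::finite \<Rightarrow> 'a \<Rightarrow> real) \<Rightarrow> bool" where
  "manipulable uA u \<longleftrightarrow> (\<forall>x. x \<notin> fav uA \<longrightarrow> improvable uA u x)"

(* Generic Finite Alternatives: X finite (type class) and all preferences strict *)
definition generic_finite_alternatives :: "('a::finite \<Rightarrow> real) \<Rightarrow> ('v::finite \<Rightarrow> 'a \<Rightarrow> real) \<Rightarrow> bool" where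
  "generic_finite_alternatives uA u \<longleftrightarrow> inj uA \<and> (\<forall>i. inj (u i))"

(* Amendment procedure.  A history is the list (in chronological order) of past rounds,
   each recorded as (proposal, vote profile). *)
type_synonym ('a, 'v) hist = "('a \<times> ('v \<Rightarrow> bool)) list"
type_synonym ('a, 'v) setter_strat = "('a, 'v) hist \<Rightarrow> 'a pmf"
type_synonym ('a, 'v) voter_strat = "('a, 'v) hist \<Rightarrow> 'a \<Rightarrow> bool pmf"

definition cur_default :: "'a \<Rightarrow> ('a, 'v::finite) hist \<Rightarrow> 'a" where
  "cur_default x0 h = foldl (\<lambda>x (a, v). if strict_majority v then a else x) x0 h"

definition vote_dist :: "('v::finite \<Rightarrow> ('a, 'v) voter_strat) \<Rightarrow> ('a, 'v) hist \<Rightarrow> 'a \<Rightarrow> ('v \<Rightarrow> bool) pmf" where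
  "vote_dist \<sigma>V h a = Pi_pmf UNIV False (\<lambda>i. \<sigma>V i h a)"

primrec play :: "'a \<Rightarrow> ('a, 'v::finite) setter_strat \<Rightarrow> ('v \<Rightarrow> ('a, 'v) voter_strat)
                 \<Rightarrow> nat \<Rightarrow> ('a, 'v) hist \<Rightarrow> 'a pmf" where
  "play x0 \<sigma>A \<sigma>V 0 h = return_pmf (cur_default x0 h)"
| "play x0 \<sigma>A \<sigma>V (Suc k) h =
     bind_pmf (\<sigma>A h) (\<lambda>a. bind_pmf (vote_dist \<sigma>V h a) (\<lambda>v. play x0 \<sigma>A \<sigma>V k (h @ [(a, v)])))"

(* distribution of the implemented policy at the voting node (h, a), k rounds remaining
   after the current one *)
definition vplay :: "'a \<Rightarrow> ('a, 'v::finite) setter_strat \<Rightarrow> ('v \<Rightarrow> ('a, 'v) voter_strat)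
                 \<Rightarrow> nat \<Rightarrow> ('a, 'v) hist \<Rightarrow> 'a \<Rightarrow> 'a pmf" where
  "vplay x0 \<sigma>A \<sigma>V k h a = bind_pmf (vote_dist \<sigma>V h a) (\<lambda>v. play x0 \<sigma>A \<sigma>V k (h @ [(a, v)]))"

definition EU :: "('a \<Rightarrow> real) \<Rightarrow> 'a pmf \<Rightarrow> real" where
  "EU f p = measure_pmf.expectation p f"

definition spe :: "('a \<Rightarrow> real) \<Rightarrow> ('v::finite \<Rightarrow> 'a \<Rightarrow> real) \<Rightarrow> nat \<Rightarrow> 'a
                 \<Rightarrow> ('a, 'v) setter_strat \<Rightarrow> ('v \<Rightarrow> ('a, 'v) voter_strat) \<Rightarrow> bool" where
  "spe uA u T x0 \<sigma>A \<sigma>V \<longleftrightarrow>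
     (\<forall>h. length h < T \<longrightarrow>
        (\<forall>\<sigma>A'. EU uA (play x0 \<sigma>A' \<sigma>V (T - length h) h) \<le> EU uA (play x0 \<sigma>A \<sigma>V (T - length h) h)) \<and>
        (\<forall>i \<sigma>'. EU (u i) (play x0 \<sigma>A (\<sigma>V(i := \<sigma>')) (T - length h) h)
                    \<le> EU (u i) (play x0 \<sigma>A \<sigma>V (T - length h) h))) \<and>
     (\<forall>h a. length h < T \<longrightarrow>
        (\<forall>\<sigma>A'. EU uA (vplay x0 \<sigma>A' \<sigma>V (T - Suc (length h)) h a)
                 \<le> EU uA (vplay x0 \<sigma>A \<sigma>V (T - Suc (length h)) h a)) \<and>
        (\<forall>i \<sigma>'. EU (u i) (vplay x0 \<sigma>A (\<sigma>V(i := \<sigma>')) (T - Suc (length h)) h a)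
                    \<le> EU (u i) (vplay x0 \<sigma>A \<sigma>V (T - Suc (length h)) h a)))"

definition as_if_pivotal :: "('v::finite \<Rightarrow> 'a \<Rightarrow> real) \<Rightarrow> nat \<Rightarrow> 'a
                 \<Rightarrow> ('a, 'v) setter_strat \<Rightarrow> ('v \<Rightarrow> ('a, 'v) voter_strat) \<Rightarrow> bool" where
  "as_if_pivotal u T x0 \<sigma>A \<sigma>V \<longleftrightarrow>
     (\<forall>h a x y. length h < T \<longrightarrow>
        (\<forall>v. strict_majority v \<longrightarrow> play x0 \<sigma>A \<sigma>V (T - Suc (length h)) (h @ [(a, v)]) = return_pmf x) \<longrightarrow>
        (\<forall>v. \<not> strict_majority v \<longrightarrow> play x0 \<sigma>A \<sigma>V (T - Suc (length h)) (h @ [(a, v)]) = return_pmf y) \<longrightarrow>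
        (\<forall>i. (u i x > u i y \<longrightarrow> \<sigma>V i h a = return_pmf True) \<and>
             (u i y > u i x \<longrightarrow> \<sigma>V i h a = return_pmf False)))"

definition equilibrium :: "('a \<Rightarrow> real) \<Rightarrow> ('v::finite \<Rightarrow> 'a \<Rightarrow> real) \<Rightarrow> nat \<Rightarrow> 'a
                 \<Rightarrow> ('a, 'v) setter_strat \<Rightarrow> ('v \<Rightarrow> ('a, 'v) voter_strat) \<Rightarrow> bool" where
  "equilibrium uA u T x0 \<sigma>A \<sigma>V \<longleftrightarrow> spe uA u T x0 \<sigma>A \<sigma>V \<and> as_if_pivotal u T x0 \<sigma>A \<sigma>V"

end

theory Submission
  imports Defs
begin

lemma EU_sum:
  fixes p :: "'b::finite pmf"
  shows "EU F p = (\<Sum>z\<in>UNIV. pmf p z * F z)"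
  unfolding EU_def by (subst integral_measure_pmf[of UNIV]) auto

lemma EU_le:
  fixes p :: "'b::finite pmf"
  assumes "\<forall>z\<in>set_pmf p. F z \<le> c"
  shows "EU F p \<le> c"
proof -
  have "EU F p = (\<Sum>z\<in>UNIV. pmf p z * F z)" by (rule EU_sum)
  also have "\<dots> \<le> (\<Sum>z\<in>UNIV. pmf p z * c)"
  proof (rule sum_mono)
    fix z :: 'b
    show "pmf p z * F z \<le> pmf p z * c"
    proof (cases "z \<in> set_pmf p")
      case True then show ?thesis using assms by (simp add: mult_left_mono)
    next
      case False then show ?thesis by (simp add: set_pmf_iff)
    qed
  qed
  also have "\<dots> = (\<Sum>z\<in>UNIV. pmf p z) * c" by (simp add: sum_distrib_right)
  also have "(\<Sum>z\<in>UNIV. pmf p z) = 1" by (rule sum_pmf_eq_1) auto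
  finally show ?thesis by simp
qed

lemma EU_eq:
  fixes p :: "'b::finite pmf"
  assumes "\<forall>z\<in>set_pmf p. F z \<le> c" and "c \<le> EU F p"
  shows "\<forall>z\<in>set_pmf p. F z = c"
proof -
  have s1: "(\<Sum>z\<in>UNIV. pmf p z) = 1" by (rule sum_pmf_eq_1) auto
  have "(\<Sum>z\<in>UNIV. pmf p z * (c - F z)) = (\<Sum>z\<in>UNIV. pmf p z) * c - (\<Sum>z\<in>UNIV. pmf p z * F z)"
    by (simp add: algebra_simps sum_subtractf sum_distrib_right sum_distrib_left)
  also have "\<dots> = c - EU F p" using s1 EU_sum[of F p] by simp
  finally have e: "(\<Sum>z\<in>UNIV. pmf p z * (c - F z)) \<le> 0" using assms(2) by simp
  have nn: "\<forall>z\<in>UNIV. 0 \<le> pmf p z * (c - F z)"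
  proof
    fix z :: 'b
    show "0 \<le> pmf p z * (c - F z)"
    proof (cases "z \<in> set_pmf p")
      case True then show ?thesis using assms(1) by simp
    next
      case False then show ?thesis by (simp add: set_pmf_iff)
    qed
  qed
  have "(\<Sum>z\<in>UNIV. pmf p z * (c - F z)) = 0"
  proof -
    have "0 \<le> (\<Sum>z\<in>UNIV. pmf p z * (c - F z))" using nn by (simp add: sum_nonneg)
    then show ?thesis using e by linarith
  qed
  then have "\<forall>z\<in>UNIV. pmf p z * (c - F z) = 0"
    using sum_nonneg_eq_0_iff[of UNIV "\<lambda>z. pmf p z * (c - F z)"] nn by simp
  then show ?thesis using assms(1)
    by (auto simp: set_pmf_iff)
qed

lemma EU_bind_le:
  fixes p :: "'b::finite pmf" and q :: "'b \<Rightarrow> 'c::finite pmf"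
  assumes "\<forall>a\<in>set_pmf p. EU F (q a) \<le> c"
  shows "EU F (bind_pmf p q) \<le> c"
proof -
  have "EU F (bind_pmf p q) = (\<Sum>a\<in>UNIV. pmf p a * EU F (q a))"
    unfolding EU_def by (subst pmf_expectation_bind[of UNIV]) auto
  also have "\<dots> \<le> (\<Sum>a\<in>UNIV. pmf p a * c)"
  proof (rule sum_mono)
    fix z :: 'b
    show "pmf p z * EU F (q z) \<le> pmf p z * c"
    proof (cases "z \<in> set_pmf p")
      case True then show ?thesis using assms by (simp add: mult_left_mono)
    next
      case False then show ?thesis by (simp add: set_pmf_iff)
    qed
  qed
  also have "\<dots> = (\<Sum>z\<in>UNIV. pmf p z) * c" by (simp add: sum_distrib_right)
  also have "(\<Sum>z\<in>UNIV. pmf p z) = 1" by (rule sum_pmf_eq_1) auto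
  finally show ?thesis by simp
qed

lemma maj_irrefl: "\<not> maj_strict_pref u x x"
  by (simp add: maj_strict_pref_def strict_majority_def)

definition gg :: "('a::finite \<Rightarrow> real) \<Rightarrow> ('v::finite \<Rightarrow> 'a \<Rightarrow> real) \<Rightarrow> ('a \<Rightarrow> 'a) \<Rightarrow> 'a \<Rightarrow> 'a \<Rightarrow> 'a" where
  "gg uA u \<phi> x a = (if maj_strict_pref u (\<phi> a) (\<phi> x) then \<phi> a else \<phi> x)"

definition amax :: "('a::finite \<Rightarrow> real) \<Rightarrow> ('v::finite \<Rightarrow> 'a \<Rightarrow> real) \<Rightarrow> ('a \<Rightarrow> 'a) \<Rightarrow> 'a \<Rightarrow> 'a" where
  "amax uA u \<phi> x = (SOME a. \<forall>b. uA (gg uA u \<phi> x b) \<le> uA (gg uA u \<phi> x a))"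

primrec ff :: "('a::finite \<Rightarrow> real) \<Rightarrow> ('v::finite \<Rightarrow> 'a \<Rightarrow> real) \<Rightarrow> nat \<Rightarrow> 'a \<Rightarrow> 'a" where
  "ff uA u 0 x = x"
| "ff uA u (Suc k) x = gg uA u (ff uA u k) x (amax uA u (ff uA u k) x)"

lemma exists_max:
  fixes F :: "'b::finite \<Rightarrow> real"
  shows "\<exists>a. \<forall>b. F b \<le> F a"
proof -
  have "Max (range F) \<in> range F" by (rule Max_in) auto
  then obtain a where "F a = Max (range F)" by (metis rangeE)
  then have "\<forall>b. F b \<le> F a" by simp
  then show ?thesis by blast
qed

lemma amax_max: "uA (gg uA u \<phi> x b) \<le> uA (gg uA u \<phi> x (amax uA u \<phi> x))"
  unfolding amax_def using someI_ex[OF exists_max[of "\<lambda>a. uA (gg uA u \<phi> x a)"]] by blast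

lemma ff_Suc_ge: "uA (gg uA u (ff uA u k) x b) \<le> uA (ff uA u (Suc k) x)"
  using amax_max by simp

lemma gg_self: "gg uA u \<phi> x x = \<phi> x"
  by (simp add: gg_def maj_irrefl)

lemma ff_mono: "uA (ff uA u k x) \<le> uA (ff uA u (Suc k) x)"
  using ff_Suc_ge[of uA u k x x] by (simp add: gg_self)

lemma ff_Suc_cases: "ff uA u (Suc k) x = ff uA u k x \<or>
   (maj_strict_pref u (ff uA u (Suc k) x) (ff uA u k x) \<and> ff uA u (Suc k) x \<in> range (ff uA u k))"
  by (auto simp: gg_def)

lemma range_sub: "range (ff uA u (Suc k)) \<subseteq> range (ff uA u k)"
  using ff_Suc_cases by blast

lemma KA:
  assumes injA: "inj uA"
  shows "z \<in> range (ff uA u k) \<Longrightarrow> maj_strict_pref u y z \<Longrightarrow> uA y > uA z \<Longrightarrow>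
     \<exists>s\<in>range (ff uA u k). maj_strict_pref u s z \<and> uA s \<ge> uA y"
proof (induction k arbitrary: z)
  case 0
  then show ?case by auto
next
  case (Suc k)
  have zk: "z \<in> range (ff uA u k)" using Suc.prems(1) range_sub by blast
  then obtain t where t: "z = ff uA u k t" by auto
  obtain s where s: "s \<in> range (ff uA u k)" "maj_strict_pref u s z" "uA s \<ge> uA y"
    using Suc.IH[OF zk Suc.prems(2,3)] by blast
  obtain a where a: "s = ff uA u k a" using s(1) by auto
  have "gg uA u (ff uA u k) t a = s" using s(2) a t by (simp add: gg_def)
  then have ge: "uA s \<le> uA (ff uA u (Suc k) t)" using ff_Suc_ge[of uA u k t a] by simp
  then have "ff uA u (Suc k) t \<noteq> z" using s(3) Suc.prems(3) by auto
  then have "maj_strict_pref u (ff uA u (Suc k) t) z" using ff_Suc_cases[of uA u k t] t by auto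
  moreover have "ff uA u (Suc k) t \<in> range (ff uA u (Suc k))" by simp
  ultimately show ?case using ge s(3) by force
qed

lemma card_one_fav:
  assumes injA: "inj uA" and man: "manipulable uA u"
    and c: "range (ff uA u k) = {w}"
  shows "w \<in> fav uA"
proof (rule ccontr)
  assume "w \<notin> fav uA"
  then obtain y where y: "uA y > uA w" "maj_strict_pref u y w"
    using man unfolding manipulable_def improvable_def by blast
  obtain s where "s \<in> range (ff uA u k)" "maj_strict_pref u s w"
    using KA[OF injA, where z=w and k=k and u=u and y=y] c y by auto
  then show False using c maj_irrefl by force
qed

lemma card_dec:
  fixes uA :: "'a::finite \<Rightarrow> real"
  assumes injA: "inj uA" and man: "manipulable uA u"
  shows "card (range (ff uA u k)) + k \<le> CARD('a) \<or> card (range (ff uA u k)) = 1"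
proof (induction k)
  case 0
  then show ?case by simp
next
  case (Suc k)
  let ?S = "range (ff uA u k)" and ?S' = "range (ff uA u (Suc k))"
  have sub: "?S' \<subseteq> ?S" by (rule range_sub)
  show ?case
  proof (cases "card ?S = 1")
    case True
    then have "card ?S' \<le> 1" using card_mono[OF _ sub] by simp
    moreover have "card ?S' \<noteq> 0" by (simp del: ff.simps)
    ultimately have "card ?S' = 1" by linarith
    then show ?thesis by blast
  next
    case False
    then have ck: "card ?S + k \<le> CARD('a)" using Suc.IH by simp
    have ne: "?S \<noteq> {}" by simp
    have "Min (uA ` ?S) \<in> uA ` ?S" by (rule Min_in) auto
    then obtain w where w: "w \<in> ?S" "uA w = Min (uA ` ?S)" by (metis (no_types, lifting) imageE)
    have wmin: "\<forall>z\<in>?S. uA w \<le> uA z" using w by simp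
    have "card ?S \<ge> 2" using False ne by (metis One_nat_def Suc_1 card_0_eq finite less_2_cases not_less)
    then obtain w' where w': "w' \<in> ?S" "w' \<noteq> w"
      by (metis One_nat_def card_le_Suc0_iff_eq finite not_less_eq_eq numeral_2_eq_2)
    have "w \<notin> fav uA"
    proof
      assume "w \<in> fav uA"
      then have "uA w' \<le> uA w" by (simp add: fav_def)
      moreover have "uA w \<le> uA w'" using wmin w'(1) by blast
      ultimately have "uA w' = uA w" by linarith
      then show False using injA w' by (meson injD)
    qed
    then obtain y where y: "uA y > uA w" "maj_strict_pref u y w"
      using man unfolding manipulable_def improvable_def by blast
    obtain s where s: "s \<in> ?S" "maj_strict_pref u s w" "uA s \<ge> uA y"
      using KA[OF injA w(1) y(2) y(1)] by blast
    have "w \<notin> ?S'"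
    proof
      assume "w \<in> ?S'"
      then obtain t where t: "w = ff uA u (Suc k) t" by auto
      have "uA (ff uA u k t) \<le> uA w" using ff_mono[of uA u k t] t by simp
      moreover have "uA w \<le> uA (ff uA u k t)" using wmin by blast
      ultimately have "uA (ff uA u k t) = uA w" by linarith
      then have tw: "ff uA u k t = w" using injA by (meson injD)
      obtain a where a: "s = ff uA u k a" using s(1) by auto
      have "gg uA u (ff uA u k) t a = s" using s(2) a tw by (simp add: gg_def)
      then have "uA s \<le> uA w" using ff_Suc_ge[of uA u k t a] t by simp
      then show False using s(3) y(1) by simp
    qed
    then have "?S' \<subseteq> ?S - {w}" using sub by blast
    then have "card ?S' \<le> card ?S - 1" using card_mono[of "?S - {w}" ?S'] w(1) by simp
    then have "card ?S' + Suc k \<le> CARD('a)" using ck \<open>card ?S \<ge> 2\<close> by linarith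
    then show ?thesis by blast
  qed
qed

lemma ff_fav:
  fixes uA :: "'a::finite \<Rightarrow> real"
  assumes injA: "inj uA" and man: "manipulable uA u" and T: "T \<ge> CARD('a) - 1"
  shows "ff uA u T x \<in> fav uA"
proof -
  let ?S = "range (ff uA u T)"
  have "card ?S \<noteq> 0" by simp
  moreover have "card ?S + T \<le> CARD('a) \<or> card ?S = 1" by (rule card_dec[OF injA man])
  ultimately have "card ?S = 1" using T by linarith
  then obtain w where "?S = {w}" by (meson card_1_singletonE)
  then show ?thesis using card_one_fav[OF injA man] by (metis rangeI singletonD)
qed

lemma ff_unimp:
  assumes injA: "inj uA" and x: "\<not> improvable uA u x"
  shows "ff uA u k x = x"
proof (induction k)
  case 0 then show ?case by simp
next
  case (Suc k)
  show ?case
  proof (rule ccontr)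
    assume ne: "ff uA u (Suc k) x \<noteq> x"
    then have m: "maj_strict_pref u (ff uA u (Suc k) x) x" using ff_Suc_cases[of uA u k x] Suc.IH by auto
    have "uA x \<le> uA (ff uA u (Suc k) x)" using ff_mono[of uA u k x] Suc.IH by simp
    then have "uA x < uA (ff uA u (Suc k) x)" using ne injA by (metis injD order_le_less)
    then show False using m x unfolding improvable_def by blast
  qed
qed


lemma cur_snoc: "cur_default x0 (h @ [(a, v)]) = (if strict_majority v then a else cur_default x0 h)"
  by (simp add: cur_default_def)

lemma play_Suc_vplay: "play x0 \<sigma>A \<sigma>V (Suc k) h = bind_pmf (\<sigma>A h) (\<lambda>a. vplay x0 \<sigma>A \<sigma>V k h a)"
  by (simp add: vplay_def)

lemma play_indep:
  "(\<forall>h'. length h \<le> length h' \<longrightarrow> \<sigma>A' h' = \<sigma>A h') \<Longrightarrow> play x0 \<sigma>A' \<sigma>V k h = play x0 \<sigma>A \<sigma>V k h"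
proof (induction k arbitrary: h)
  case 0 then show ?case by simp
next
  case (Suc k)
  have "\<And>a v. play x0 \<sigma>A' \<sigma>V k (h @ [(a, v)]) = play x0 \<sigma>A \<sigma>V k (h @ [(a, v)])"
    using Suc.prems by (intro Suc.IH) auto
  moreover have "\<sigma>A' h = \<sigma>A h" using Suc.prems by simp
  ultimately show ?case by simp
qed

lemma vplay_indep:
  "(\<forall>h'. length h < length h' \<longrightarrow> \<sigma>A' h' = \<sigma>A h') \<Longrightarrow> vplay x0 \<sigma>A' \<sigma>V k h a = vplay x0 \<sigma>A \<sigma>V k h a"
  unfolding vplay_def
  by (intro bind_pmf_cong refl play_indep) auto

lemma maj_all: "strict_majority (\<lambda>_::'v::finite. True)"
  by (simp add: strict_majority_def)

lemma maj_none: "\<not> strict_majority (\<lambda>_::'v::finite. False)"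
  by (simp add: strict_majority_def)

lemma maj_mono:
  assumes "\<forall>j. v j \<longrightarrow> w j" and "strict_majority (v::'v::finite \<Rightarrow> bool)"
  shows "strict_majority w"
proof -
  have "card {i. v i} \<le> card {i. w i}" using assms(1) by (intro card_mono) auto
  then show ?thesis using assms(2) unfolding strict_majority_def by linarith
qed

lemma vote_supp:
  "v \<in> set_pmf (vote_dist \<sigma>V h a) \<Longrightarrow> v j \<in> set_pmf (\<sigma>V j h a)"
  unfolding vote_dist_def by (simp add: set_Pi_pmf PiE_dflt_def)

lemma vote_supp_ret:
  assumes "\<forall>i. \<sigma>V i h a = return_pmf (s i)" and "v \<in> set_pmf (vote_dist \<sigma>V h a)"
  shows "v = s"
proof
  fix j show "v j = s j" using vote_supp[OF assms(2), of j] assms(1) by simp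
qed

lemma L_vplay:
  assumes injU: "\<forall>i. inj (u i)"
    and IH: "\<forall>a v. play x0 \<sigma>A \<sigma>V k (h @ [(a, v)]) = return_pmf (ff uA u k (cur_default x0 (h @ [(a, v)])))"
    and piv: "\<forall>i. (u i (ff uA u k a) > u i (ff uA u k (cur_default x0 h)) \<longrightarrow> \<sigma>V i h a = return_pmf True) \<and>
                  (u i (ff uA u k (cur_default x0 h)) > u i (ff uA u k a) \<longrightarrow> \<sigma>V i h a = return_pmf False)"
  shows "vplay x0 \<sigma>A \<sigma>V k h a = return_pmf (gg uA u (ff uA u k) (cur_default x0 h) a)"
proof -
  let ?x = "cur_default x0 h"
  let ?g = "gg uA u (ff uA u k) ?x a"
  have "set_pmf (vplay x0 \<sigma>A \<sigma>V k h a) \<subseteq> {?g}"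
  proof
    fix z assume "z \<in> set_pmf (vplay x0 \<sigma>A \<sigma>V k h a)"
    then obtain v where v: "v \<in> set_pmf (vote_dist \<sigma>V h a)"
      and z: "z = ff uA u k (if strict_majority v then a else ?x)"
      unfolding vplay_def using IH by (auto simp: set_bind_pmf cur_snoc)
    show "z \<in> {?g}"
    proof (cases "ff uA u k a = ff uA u k ?x")
      case True
      have zz: "z = ff uA u k ?x" using z True by (cases "strict_majority v") simp_all
      have g1: "gg uA u (ff uA u k) ?x a = ff uA u k ?x" unfolding gg_def using True maj_irrefl[of u "ff uA u k ?x"]
        by (simp only: if_False)
      show ?thesis by (simp only: zz g1 singleton_iff)
    next
      case False
      define s where "s = (\<lambda>i. u i (ff uA u k a) > u i (ff uA u k ?x))"
      have "\<forall>i. \<sigma>V i h a = return_pmf (s i)"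
      proof
        fix i
        show "\<sigma>V i h a = return_pmf (s i)"
        proof (cases "s i")
          case True then show ?thesis using piv s_def by simp
        next
          case F: False
          have "u i (ff uA u k a) \<noteq> u i (ff uA u k ?x)" using False injU by (meson injD)
          then have "u i (ff uA u k ?x) > u i (ff uA u k a)" using F s_def by simp
          then show ?thesis using piv F by simp
        qed
      qed
      then have "v = s" by (rule vote_supp_ret[OF _ v])
      then have zz: "z = ff uA u k (if strict_majority s then a else ?x)" using z by simp
      have ms: "maj_strict_pref u (ff uA u k a) (ff uA u k ?x) = strict_majority s"
        unfolding maj_strict_pref_def s_def ..
      have "gg uA u (ff uA u k) ?x a = ff uA u k (if strict_majority s then a else ?x)"
        unfolding gg_def ms by simp
      then show ?thesis using zz by simp
    qed
  qed
  then show ?thesis by (simp add: set_pmf_subset_singleton)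
qed

lemma L_main:
  fixes uA :: "'a::finite \<Rightarrow> real" and u :: "'v::finite \<Rightarrow> 'a \<Rightarrow> real"
  assumes injA: "inj uA" and injU: "\<forall>i. inj (u i)"
    and eq: "equilibrium uA u T x0 \<sigma>A \<sigma>V"
  shows "length h + k = T \<Longrightarrow> play x0 \<sigma>A \<sigma>V k h = return_pmf (ff uA u k (cur_default x0 h))"
proof (induction k arbitrary: h)
  case 0 then show ?case by simp
next
  case (Suc k)
  let ?x = "cur_default x0 h"
  have lt: "length h < T" and kk: "T - Suc (length h) = k" and kk2: "T - length h = Suc k" using Suc.prems by auto
  have IH: "\<forall>a v. play x0 \<sigma>A \<sigma>V k (h @ [(a, v)]) = return_pmf (ff uA u k (cur_default x0 (h @ [(a, v)])))"
    using Suc.IH Suc.prems by auto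
  have vp: "\<forall>a. vplay x0 \<sigma>A \<sigma>V k h a = return_pmf (gg uA u (ff uA u k) ?x a)"
  proof
    fix a
    have "\<forall>i. (u i (ff uA u k a) > u i (ff uA u k ?x) \<longrightarrow> \<sigma>V i h a = return_pmf True) \<and>
                  (u i (ff uA u k ?x) > u i (ff uA u k a) \<longrightarrow> \<sigma>V i h a = return_pmf False)"
    proof -
      have p1: "\<forall>v. strict_majority v \<longrightarrow> play x0 \<sigma>A \<sigma>V (T - Suc (length h)) (h @ [(a, v)]) = return_pmf (ff uA u k a)"
        using IH kk by (simp add: cur_snoc)
      have p2: "\<forall>v. \<not> strict_majority v \<longrightarrow> play x0 \<sigma>A \<sigma>V (T - Suc (length h)) (h @ [(a, v)]) = return_pmf (ff uA u k ?x)"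
        using IH kk by (simp add: cur_snoc)
      have "as_if_pivotal u T x0 \<sigma>A \<sigma>V" using eq by (simp add: equilibrium_def)
      then have "length h < T \<longrightarrow>
        (\<forall>v. strict_majority v \<longrightarrow> play x0 \<sigma>A \<sigma>V (T - Suc (length h)) (h @ [(a, v)]) = return_pmf (ff uA u k a)) \<longrightarrow>
        (\<forall>v. \<not> strict_majority v \<longrightarrow> play x0 \<sigma>A \<sigma>V (T - Suc (length h)) (h @ [(a, v)]) = return_pmf (ff uA u k ?x)) \<longrightarrow>
        (\<forall>i. (u i (ff uA u k a) > u i (ff uA u k ?x) \<longrightarrow> \<sigma>V i h a = return_pmf True) \<and>
             (u i (ff uA u k ?x) > u i (ff uA u k a) \<longrightarrow> \<sigma>V i h a = return_pmf False))"
        unfolding as_if_pivotal_def by blast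
      then show ?thesis using lt p1 p2 by blast
    qed
    then show "vplay x0 \<sigma>A \<sigma>V k h a = return_pmf (gg uA u (ff uA u k) ?x a)"
      using L_vplay[OF injU IH] by blast
  qed
  define a0 where "a0 = amax uA u (ff uA u k) ?x"
  define \<sigma>A' where "\<sigma>A' = \<sigma>A(h := return_pmf a0)"
  have "play x0 \<sigma>A' \<sigma>V (Suc k) h = vplay x0 \<sigma>A' \<sigma>V k h a0"
    by (simp only: play_Suc_vplay \<sigma>A'_def fun_upd_same bind_return_pmf)
  also have "\<dots> = vplay x0 \<sigma>A \<sigma>V k h a0"
    by (rule vplay_indep) (auto simp: \<sigma>A'_def)
  also have "\<dots> = return_pmf (ff uA u (Suc k) ?x)" using vp a0_def by simp
  finally have dev: "play x0 \<sigma>A' \<sigma>V (Suc k) h = return_pmf (ff uA u (Suc k) ?x)" .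
  have pl: "play x0 \<sigma>A \<sigma>V (Suc k) h = bind_pmf (\<sigma>A h) (\<lambda>a. return_pmf (gg uA u (ff uA u k) ?x a))"
    using vp by (simp only: play_Suc_vplay)
  have "EU uA (play x0 \<sigma>A' \<sigma>V (Suc k) h) \<le> EU uA (play x0 \<sigma>A \<sigma>V (Suc k) h)"
  proof -
    have "spe uA u T x0 \<sigma>A \<sigma>V" using eq by (simp add: equilibrium_def)
    then have "\<forall>\<sigma>A'. EU uA (play x0 \<sigma>A' \<sigma>V (T - length h) h) \<le> EU uA (play x0 \<sigma>A \<sigma>V (T - length h) h)"
      using lt unfolding spe_def by blast
    then show ?thesis unfolding kk2 by blast
  qed
  then have c: "uA (ff uA u (Suc k) ?x) \<le> EU uA (play x0 \<sigma>A \<sigma>V (Suc k) h)"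
    using dev by (simp add: EU_def)
  have bnd: "\<forall>z\<in>set_pmf (play x0 \<sigma>A \<sigma>V (Suc k) h). uA z \<le> uA (ff uA u (Suc k) ?x)"
    unfolding pl using ff_Suc_ge by (auto simp: set_bind_pmf simp del: ff.simps)
  have "\<forall>z\<in>set_pmf (play x0 \<sigma>A \<sigma>V (Suc k) h). uA z = uA (ff uA u (Suc k) ?x)"
    using EU_eq[OF bnd c] .
  then have "set_pmf (play x0 \<sigma>A \<sigma>V (Suc k) h) \<subseteq> {ff uA u (Suc k) ?x}"
    using injA by (simp only: inj_eq) blast
  then show ?case by (simp only: set_pmf_subset_singleton)
qed


definition sA :: "('a::finite \<Rightarrow> real) \<Rightarrow> ('v::finite \<Rightarrow> 'a \<Rightarrow> real) \<Rightarrow> nat \<Rightarrow> 'a \<Rightarrow> ('a, 'v) setter_strat" where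
  "sA uA u T x0 h = return_pmf (amax uA u (ff uA u (T - Suc (length h))) (cur_default x0 h))"

definition sV :: "('a::finite \<Rightarrow> real) \<Rightarrow> ('v::finite \<Rightarrow> 'a \<Rightarrow> real) \<Rightarrow> nat \<Rightarrow> 'a \<Rightarrow> 'v \<Rightarrow> ('a, 'v) voter_strat" where
  "sV uA u T x0 i h a = return_pmf (u i (ff uA u (T - Suc (length h)) a) > u i (ff uA u (T - Suc (length h)) (cur_default x0 h)))"

lemma ms_eq: "strict_majority (\<lambda>i. u i A > u i X) = maj_strict_pref u A X"
  by (simp add: maj_strict_pref_def)

lemma ff_if: "ff uA u k (if maj_strict_pref u (ff uA u k a) (ff uA u k x) then a else x) = gg uA u (ff uA u k) x a"
  by (simp add: gg_def)

lemma sV_k: assumes "length h + Suc k = T" shows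
   "sV uA u T x0 i h a = return_pmf (u i (ff uA u k a) > u i (ff uA u k (cur_default x0 h)))"
proof -
  have k: "T - Suc (length h) = k" using assms by simp
  show ?thesis by (simp add: sV_def k)
qed

lemma sA_k: assumes "length h + Suc k = T" shows
   "sA uA u T x0 h = return_pmf (amax uA u (ff uA u k) (cur_default x0 h))"
proof -
  have k: "T - Suc (length h) = k" using assms by simp
  show ?thesis by (simp add: sA_def k)
qed

lemma C1:
  fixes uA :: "'a::finite \<Rightarrow> real" and u :: "'v::finite \<Rightarrow> 'a \<Rightarrow> real"
  assumes injU: "\<forall>i. inj (u i)"
  shows "length h + k = T \<Longrightarrow> play x0 (sA uA u T x0) (sV uA u T x0) k h = return_pmf (ff uA u k (cur_default x0 h))"
proof (induction k arbitrary: h)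
  case 0 then show ?case by simp
next
  case (Suc k)
  let ?x = "cur_default x0 h"
  have IH: "\<forall>a v. play x0 (sA uA u T x0) (sV uA u T x0) k (h @ [(a, v)]) = return_pmf (ff uA u k (cur_default x0 (h @ [(a, v)])))"
    using Suc.IH Suc.prems by auto
  have piv: "\<forall>i. (u i (ff uA u k a) > u i (ff uA u k ?x) \<longrightarrow> sV uA u T x0 i h a = return_pmf True) \<and>
                  (u i (ff uA u k ?x) > u i (ff uA u k a) \<longrightarrow> sV uA u T x0 i h a = return_pmf False)" for a
    using sV_k[OF Suc.prems] by auto
  have vp: "vplay x0 (sA uA u T x0) (sV uA u T x0) k h a = return_pmf (gg uA u (ff uA u k) ?x a)" for a
    by (rule L_vplay[OF injU IH piv])
  show ?case
    by (simp only: play_Suc_vplay sA_k[OF Suc.prems] bind_return_pmf vp ff.simps)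
qed

lemma C1v:
  fixes uA :: "'a::finite \<Rightarrow> real" and u :: "'v::finite \<Rightarrow> 'a \<Rightarrow> real"
  assumes injU: "\<forall>i. inj (u i)" and len: "length h + Suc k = T"
  shows "vplay x0 (sA uA u T x0) (sV uA u T x0) k h a = return_pmf (gg uA u (ff uA u k) (cur_default x0 h) a)"
proof -
  let ?x = "cur_default x0 h"
  have IH: "\<forall>a v. play x0 (sA uA u T x0) (sV uA u T x0) k (h @ [(a, v)]) = return_pmf (ff uA u k (cur_default x0 (h @ [(a, v)])))"
    using C1[OF injU] len by auto
  have piv: "\<forall>i. (u i (ff uA u k a) > u i (ff uA u k ?x) \<longrightarrow> sV uA u T x0 i h a = return_pmf True) \<and>
                  (u i (ff uA u k ?x) > u i (ff uA u k a) \<longrightarrow> sV uA u T x0 i h a = return_pmf False)"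
    using sV_k[OF len] by auto
  show ?thesis by (rule L_vplay[OF injU IH piv])
qed

lemma C2v_gen:
  fixes uA :: "'a::finite \<Rightarrow> real" and u :: "'v::finite \<Rightarrow> 'a \<Rightarrow> real"
  assumes IH: "\<forall>a v. \<forall>z\<in>set_pmf (play x0 \<sigma>A' (sV uA u T x0) k (h @ [(a, v)])). uA z \<le> uA (ff uA u k (cur_default x0 (h @ [(a, v)])))"
    and len: "length h + Suc k = T"
  shows "\<forall>z\<in>set_pmf (vplay x0 \<sigma>A' (sV uA u T x0) k h a). uA z \<le> uA (gg uA u (ff uA u k) (cur_default x0 h) a)"
proof
  let ?x = "cur_default x0 h"
  define s where "s = (\<lambda>i. u i (ff uA u k a) > u i (ff uA u k ?x))"
  fix z assume "z \<in> set_pmf (vplay x0 \<sigma>A' (sV uA u T x0) k h a)"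
  then obtain v where v: "v \<in> set_pmf (vote_dist (sV uA u T x0) h a)"
    and z: "z \<in> set_pmf (play x0 \<sigma>A' (sV uA u T x0) k (h @ [(a, v)]))"
    unfolding vplay_def by (auto simp: set_bind_pmf)
  have "\<forall>i. sV uA u T x0 i h a = return_pmf (s i)" using sV_k[OF len] s_def by simp
  then have vs: "v = s" by (rule vote_supp_ret[OF _ v])
  have "uA z \<le> uA (ff uA u k (cur_default x0 (h @ [(a, v)])))" using IH z by blast
  also have "ff uA u k (cur_default x0 (h @ [(a, v)])) = gg uA u (ff uA u k) ?x a"
    unfolding cur_snoc vs s_def ms_eq by (rule ff_if)
  finally show "uA z \<le> uA (gg uA u (ff uA u k) ?x a)" .
qed

lemma C2:
  fixes uA :: "'a::finite \<Rightarrow> real" and u :: "'v::finite \<Rightarrow> 'a \<Rightarrow> real"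
  shows "length h + k = T \<Longrightarrow> \<forall>z\<in>set_pmf (play x0 \<sigma>A' (sV uA u T x0) k h). uA z \<le> uA (ff uA u k (cur_default x0 h))"
proof (induction k arbitrary: h)
  case 0 then show ?case by simp
next
  case (Suc k)
  have IH: "\<forall>a v. \<forall>z\<in>set_pmf (play x0 \<sigma>A' (sV uA u T x0) k (h @ [(a, v)])). uA z \<le> uA (ff uA u k (cur_default x0 (h @ [(a, v)])))"
    using Suc.IH Suc.prems by auto
  show ?case
  proof
    fix z assume "z \<in> set_pmf (play x0 \<sigma>A' (sV uA u T x0) (Suc k) h)"
    then obtain a where "z \<in> set_pmf (vplay x0 \<sigma>A' (sV uA u T x0) k h a)"
      unfolding play_Suc_vplay by (auto simp: set_bind_pmf)
    then have "uA z \<le> uA (gg uA u (ff uA u k) (cur_default x0 h) a)"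
      using C2v_gen[OF IH Suc.prems] by blast
    also have "\<dots> \<le> uA (ff uA u (Suc k) (cur_default x0 h))" by (rule ff_Suc_ge)
    finally show "uA z \<le> uA (ff uA u (Suc k) (cur_default x0 h))" .
  qed
qed

lemma C2v:
  fixes uA :: "'a::finite \<Rightarrow> real" and u :: "'v::finite \<Rightarrow> 'a \<Rightarrow> real"
  assumes len: "length h + Suc k = T"
  shows "\<forall>z\<in>set_pmf (vplay x0 \<sigma>A' (sV uA u T x0) k h a). uA z \<le> uA (gg uA u (ff uA u k) (cur_default x0 h) a)"
proof (rule C2v_gen[OF _ len], intro allI ballI)
  fix a v z assume z: "z \<in> set_pmf (play x0 \<sigma>A' (sV uA u T x0) k (h @ [(a, v)]))"
  have "length (h @ [(a, v)]) + k = T" using len by simp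
  from C2[OF this] z show "uA z \<le> uA (ff uA u k (cur_default x0 (h @ [(a, v)])))" by blast
qed

lemma pivot:
  fixes v :: "'v::finite \<Rightarrow> bool" and u :: "'v \<Rightarrow> 'a \<Rightarrow> real"
  assumes "\<forall>j. j \<noteq> i \<longrightarrow> v j = (u j A > u j X)"
  shows "u i (if strict_majority v then A else X) \<le> u i (if strict_majority (\<lambda>j. u j A > u j X) then A else X)"
proof -
  define s where "s = (\<lambda>j. u j A > u j X)"
  have vj: "\<forall>j. j \<noteq> i \<longrightarrow> v j = s j" using assms s_def by simp
  show ?thesis
  proof (cases "u i A > u i X")
    case True
    then have si: "s i" using s_def by simp
    have sub: "\<forall>j. v j \<longrightarrow> s j" using vj si by metis
    show ?thesis
    proof (cases "strict_majority s")
      case True then show ?thesis using \<open>u i A > u i X\<close> s_def by auto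
    next
      case False
      then have "\<not> strict_majority v" using maj_mono[OF sub] by blast
      then show ?thesis using False s_def by simp
    qed
  next
    case False
    then have si: "\<not> s i" using s_def by simp
    have sub: "\<forall>j. s j \<longrightarrow> v j" using vj si by metis
    show ?thesis
    proof (cases "strict_majority s")
      case True
      then have "strict_majority v" using maj_mono[OF sub] by blast
      then show ?thesis using True s_def by simp
    next
      case F: False then show ?thesis using False s_def by auto
    qed
  qed
qed

lemma C3v_gen:
  fixes uA :: "'a::finite \<Rightarrow> real" and u :: "'v::finite \<Rightarrow> 'a \<Rightarrow> real"
  assumes IH: "\<forall>a v. EU (u i) (play x0 \<sigma>A ((sV uA u T x0)(i := \<sigma>')) k (h @ [(a, v)])) \<le> u i (ff uA u k (cur_default x0 (h @ [(a, v)])))"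
    and len: "length h + Suc k = T"
  shows "EU (u i) (vplay x0 \<sigma>A ((sV uA u T x0)(i := \<sigma>')) k h a) \<le> u i (gg uA u (ff uA u k) (cur_default x0 h) a)"
  unfolding vplay_def
proof (rule EU_bind_le, rule ballI)
  let ?x = "cur_default x0 h"
  fix v assume v: "v \<in> set_pmf (vote_dist ((sV uA u T x0)(i := \<sigma>')) h a)"
  have vj: "\<forall>j. j \<noteq> i \<longrightarrow> v j = (u j (ff uA u k a) > u j (ff uA u k ?x))"
  proof (intro allI impI)
    fix j assume "j \<noteq> i"
    then have "v j \<in> set_pmf (sV uA u T x0 j h a)" using vote_supp[OF v, of j] by simp
    then show "v j = (u j (ff uA u k a) > u j (ff uA u k ?x))" using sV_k[OF len] by simp
  qed
  have "EU (u i) (play x0 \<sigma>A ((sV uA u T x0)(i := \<sigma>')) k (h @ [(a, v)])) \<le> u i (ff uA u k (cur_default x0 (h @ [(a, v)])))"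
    using IH by blast
  also have "\<dots> = u i (if strict_majority v then ff uA u k a else ff uA u k ?x)"
    by (simp add: cur_snoc)
  also have "\<dots> \<le> u i (if strict_majority (\<lambda>j. u j (ff uA u k a) > u j (ff uA u k ?x)) then ff uA u k a else ff uA u k ?x)"
    by (rule pivot[where A="ff uA u k a" and X="ff uA u k ?x", OF vj])
  also have "\<dots> = u i (gg uA u (ff uA u k) ?x a)"
    by (simp only: ms_eq gg_def)
  finally show "EU (u i) (play x0 \<sigma>A ((sV uA u T x0)(i := \<sigma>')) k (h @ [(a, v)])) \<le> u i (gg uA u (ff uA u k) ?x a)" .
qed

lemma C3:
  fixes uA :: "'a::finite \<Rightarrow> real" and u :: "'v::finite \<Rightarrow> 'a \<Rightarrow> real"
  shows "length h + k = T \<Longrightarrow> EU (u i) (play x0 (sA uA u T x0) ((sV uA u T x0)(i := \<sigma>')) k h) \<le> u i (ff uA u k (cur_default x0 h))"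
proof (induction k arbitrary: h)
  case 0 then show ?case by (simp add: EU_def)
next
  case (Suc k)
  have IH: "\<forall>a v. EU (u i) (play x0 (sA uA u T x0) ((sV uA u T x0)(i := \<sigma>')) k (h @ [(a, v)])) \<le> u i (ff uA u k (cur_default x0 (h @ [(a, v)])))"
  proof (intro allI)
    fix a v
    have "length (h @ [(a, v)]) + k = T" using Suc.prems by simp
    then show "EU (u i) (play x0 (sA uA u T x0) ((sV uA u T x0)(i := \<sigma>')) k (h @ [(a, v)])) \<le> u i (ff uA u k (cur_default x0 (h @ [(a, v)])))"
      by (rule Suc.IH)
  qed
  have "play x0 (sA uA u T x0) ((sV uA u T x0)(i := \<sigma>')) (Suc k) h =
        vplay x0 (sA uA u T x0) ((sV uA u T x0)(i := \<sigma>')) k h (amax uA u (ff uA u k) (cur_default x0 h))"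
    by (simp only: play_Suc_vplay sA_k[OF Suc.prems] bind_return_pmf)
  then show ?case using C3v_gen[OF IH Suc.prems] by (simp only: ff.simps)
qed

lemma C3v:
  fixes uA :: "'a::finite \<Rightarrow> real" and u :: "'v::finite \<Rightarrow> 'a \<Rightarrow> real"
  assumes len: "length h + Suc k = T"
  shows "EU (u i) (vplay x0 (sA uA u T x0) ((sV uA u T x0)(i := \<sigma>')) k h a) \<le> u i (gg uA u (ff uA u k) (cur_default x0 h) a)"
proof (rule C3v_gen[OF _ len], intro allI)
  fix a v
  have "length (h @ [(a, v)]) + k = T" using len by simp
  from C3[OF this] show "EU (u i) (play x0 (sA uA u T x0) ((sV uA u T x0)(i := \<sigma>')) k (h @ [(a, v)])) \<le> u i (ff uA u k (cur_default x0 (h @ [(a, v)])))" .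
qed

lemma constructed_spe:
  fixes uA :: "'a::finite \<Rightarrow> real" and u :: "'v::finite \<Rightarrow> 'a \<Rightarrow> real"
  assumes injU: "\<forall>i. inj (u i)"
  shows "spe uA u T x0 (sA uA u T x0) (sV uA u T x0)"
  unfolding spe_def
proof (intro conjI allI impI)
  fix h :: "('a, 'v) hist" assume lt: "length h < T"
  define k where "k = T - Suc (length h)"
  have len: "length h + Suc k = T" and kk: "T - length h = Suc k" using lt k_def by auto
  have len0: "length h + (T - length h) = T" using lt by simp
  let ?x = "cur_default x0 h"
  have P: "play x0 (sA uA u T x0) (sV uA u T x0) (T - length h) h = return_pmf (ff uA u (T - length h) ?x)"
    using C1[OF injU len0] .
  fix \<sigma>A' :: "('a, 'v) setter_strat"
  show "EU uA (play x0 \<sigma>A' (sV uA u T x0) (T - length h) h) \<le> EU uA (play x0 (sA uA u T x0) (sV uA u T x0) (T - length h) h)"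
    unfolding P EU_def[of uA "return_pmf _"] expectation_return_pmf
    by (rule EU_le[OF C2[OF len0]])
next
  fix h :: "('a, 'v) hist" and i and \<sigma>' :: "('a, 'v) voter_strat" assume lt: "length h < T"
  have len0: "length h + (T - length h) = T" using lt by simp
  show "EU (u i) (play x0 (sA uA u T x0) ((sV uA u T x0)(i := \<sigma>')) (T - length h) h)
         \<le> EU (u i) (play x0 (sA uA u T x0) (sV uA u T x0) (T - length h) h)"
    unfolding C1[OF injU len0] EU_def[of "u i" "return_pmf _"] expectation_return_pmf
    by (rule C3[OF len0])
next
  fix h :: "('a, 'v) hist" and a and \<sigma>A' :: "('a, 'v) setter_strat" assume lt: "length h < T"
  have len: "length h + Suc (T - Suc (length h)) = T" using lt by simp
  show "EU uA (vplay x0 \<sigma>A' (sV uA u T x0) (T - Suc (length h)) h a)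
         \<le> EU uA (vplay x0 (sA uA u T x0) (sV uA u T x0) (T - Suc (length h)) h a)"
    unfolding C1v[OF injU len] EU_def[of uA "return_pmf _"] expectation_return_pmf
    by (rule EU_le[OF C2v[OF len]])
next
  fix h :: "('a, 'v) hist" and a i and \<sigma>' :: "('a, 'v) voter_strat" assume lt: "length h < T"
  have len: "length h + Suc (T - Suc (length h)) = T" using lt by simp
  show "EU (u i) (vplay x0 (sA uA u T x0) ((sV uA u T x0)(i := \<sigma>')) (T - Suc (length h)) h a)
         \<le> EU (u i) (vplay x0 (sA uA u T x0) (sV uA u T x0) (T - Suc (length h)) h a)"
    unfolding C1v[OF injU len] EU_def[of "u i" "return_pmf _"] expectation_return_pmf
    by (rule C3v[OF len])
qed

lemma constructed_aip:
  fixes uA :: "'a::finite \<Rightarrow> real" and u :: "'v::finite \<Rightarrow> 'a \<Rightarrow> real"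
  assumes injU: "\<forall>i. inj (u i)"
  shows "as_if_pivotal u T x0 (sA uA u T x0) (sV uA u T x0)"
  unfolding as_if_pivotal_def
proof (intro allI impI)
  fix h :: "('a, 'v) hist" and a x y i
  assume lt: "length h < T"
    and px: "\<forall>v. strict_majority v \<longrightarrow> play x0 (sA uA u T x0) (sV uA u T x0) (T - Suc (length h)) (h @ [(a, v)]) = return_pmf x"
    and py: "\<forall>v. \<not> strict_majority v \<longrightarrow> play x0 (sA uA u T x0) (sV uA u T x0) (T - Suc (length h)) (h @ [(a, v)]) = return_pmf y"
  define k where "k = T - Suc (length h)"
  have len: "length h + Suc k = T" using lt k_def by auto
  have len1: "length (h @ [(a, v)]) + k = T" for v using len by simp
  have "return_pmf x = return_pmf (ff uA u k a)"
    using px[rule_format, OF maj_all] C1[OF injU len1] k_def by (simp add: cur_snoc maj_all)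
  then have xe: "x = ff uA u k a" by simp
  have "return_pmf y = return_pmf (ff uA u k (cur_default x0 h))"
    using py[rule_format, OF maj_none] C1[OF injU len1] k_def by (simp add: cur_snoc maj_none)
  then have ye: "y = ff uA u k (cur_default x0 h)" by simp
  show "(u i y < u i x \<longrightarrow> sV uA u T x0 i h a = return_pmf True) \<and>
        (u i x < u i y \<longrightarrow> sV uA u T x0 i h a = return_pmf False)"
    using sV_k[OF len] xe ye by auto
qed

lemma constructed_eq:
  fixes uA :: "'a::finite \<Rightarrow> real" and u :: "'v::finite \<Rightarrow> 'a \<Rightarrow> real"
  assumes injU: "\<forall>i. inj (u i)"
  shows "equilibrium uA u T x0 (sA uA u T x0) (sV uA u T x0)"
  using constructed_spe[OF injU] constructed_aip[OF injU] by (simp add: equilibrium_def)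


theorem theorem1:
  fixes uA :: "'a::finite \<Rightarrow> real" and u :: "'v::finite \<Rightarrow> 'a \<Rightarrow> real"
  assumes "odd CARD('v)"
    and "generic_finite_alternatives uA u"
  shows "(\<forall>T x0 \<sigma>A \<sigma>V. T \<ge> CARD('a) - 1 \<longrightarrow> equilibrium uA u T x0 \<sigma>A \<sigma>V \<longrightarrow>
            measure_pmf.prob (play x0 \<sigma>A \<sigma>V T []) (fav uA) = 1)
         \<longleftrightarrow> manipulable uA u"
proof -
  have injA: "inj uA" and injU: "\<forall>i. inj (u i)"
    using assms(2) by (auto simp: generic_finite_alternatives_def)
  have c0: "cur_default x0 ([]::('a, 'v) hist) = x0" for x0 :: 'a by (simp add: cur_default_def)
  show ?thesis
  proof
    assume L: "\<forall>T x0 \<sigma>A \<sigma>V. T \<ge> CARD('a) - 1 \<longrightarrow> equilibrium uA u T x0 \<sigma>A \<sigma>V \<longrightarrow>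
            measure_pmf.prob (play x0 \<sigma>A \<sigma>V T []) (fav uA) = 1"
    show "manipulable uA u"
    proof (rule ccontr)
      assume "\<not> manipulable uA u"
      then obtain x where x: "x \<notin> fav uA" "\<not> improvable uA u x"
        unfolding manipulable_def by blast
      let ?T = "CARD('a) - 1"
      have eq: "equilibrium uA u ?T x (sA uA u ?T x) (sV uA u ?T x)"
        by (rule constructed_eq[OF injU])
      have "play x (sA uA u ?T x) (sV uA u ?T x) ?T [] = return_pmf (ff uA u ?T (cur_default x ([]::('a, 'v) hist)))"
        using C1[OF injU, where h="[]" and k="?T" and T="?T"] by simp
      also have "\<dots> = return_pmf x" using ff_unimp[OF injA x(2)] c0 by simp
      finally have "measure_pmf.prob (play x (sA uA u ?T x) (sV uA u ?T x) ?T []) (fav uA) = 0"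
        using x(1) by simp
      moreover have "measure_pmf.prob (play x (sA uA u ?T x) (sV uA u ?T x) ?T []) (fav uA) = 1"
        using L eq by blast
      ultimately show False by simp
    qed
  next
    assume man: "manipulable uA u"
    show "\<forall>T x0 \<sigma>A \<sigma>V. T \<ge> CARD('a) - 1 \<longrightarrow> equilibrium uA u T x0 \<sigma>A \<sigma>V \<longrightarrow>
            measure_pmf.prob (play x0 \<sigma>A \<sigma>V T []) (fav uA) = 1"
    proof (intro allI impI)
      fix T x0 \<sigma>A \<sigma>V
      assume T: "T \<ge> CARD('a) - 1" and eq: "equilibrium uA u T x0 \<sigma>A \<sigma>V"
      have "play x0 \<sigma>A \<sigma>V T [] = return_pmf (ff uA u T (cur_default x0 ([]::('a, 'v) hist)))"
        by (rule L_main[OF injA injU eq]) simp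
      then have "play x0 \<sigma>A \<sigma>V T [] = return_pmf (ff uA u T x0)" using c0 by simp
      moreover have "ff uA u T x0 \<in> fav uA" by (rule ff_fav[OF injA man T])
      ultimately show "measure_pmf.prob (play x0 \<sigma>A \<sigma>V T []) (fav uA) = 1" by simp
    qed
  qed
qed

end
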